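(* Let $0 < 1/n_0 \ll \delta \ll 1$ and let $n\ge n_0$ and $k$ be positive integers with $k^2+k+1 \ge n \ge (k-1)^2+k+1$. Let $\mathcal H$ be an $n$-vertex linear hypergraph in which every edge $e$ satisfies $|e| \ge (1-\delta)\sqrt n$, and let $e,f\in\mathcal H$ be distinct intersecting edges each of size at most $k$. Let $w\in e\cap f$ and let $m$ be the number of edges of $\mathcal H$ of size at most $k-1$ containing $w$. If at least one of $e,f$ has size at most $k-1$, or if $m \le 1/(3\delta)$, then $\{e,f\}$ is a useful pair.
   Context: A hypergraph has a finite vertex set and a set of nonempty edges; linear means any two distinct edges share at most one vertex. For an edge $e$, $N(e)$ denotes the set of edges $f\ne e$ with $f\cap e\ne\varnothing$. In an $n$-vertex hypergraph a pair $\{e,f\}$ of edges is useful if $e\neq f$, $e\cap f\ne\varnothing$ and $|N(e)\cap N(f)|\le n-2$. Hierarchy convention: $0<1/n_0\ll\delta\ll1$ means there is $\delta_0>0$ such that for all $0<\delta\le\delta_0$ there is $n_0$ (depending on $\delta$) for which the statement holds. *)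

theory Defs
  imports Complex_Main
begin

definition hypergraph :: "nat set \<Rightarrow> nat set set \<Rightarrow> bool" where
  "hypergraph V H \<longleftrightarrow> finite V \<and> (\<forall>e\<in>H. e \<noteq> {} \<and> e \<subseteq> V)"

definition linear_hg :: "nat set set \<Rightarrow> bool" where
  "linear_hg H \<longleftrightarrow> (\<forall>e\<in>H. \<forall>f\<in>H. e \<noteq> f \<longrightarrow> card (e \<inter> f) \<le> 1)"

definition nbhd :: "nat set set \<Rightarrow> nat set \<Rightarrow> nat set set" where
  "nbhd H e = {f \<in> H. f \<noteq> e \<and> f \<inter> e \<noteq> {}}"

definition useful_pair :: "nat \<Rightarrow> nat set set \<Rightarrow> nat set \<Rightarrow> nat set \<Rightarrow> bool" where
  "useful_pair n H e f \<longleftrightarrow> e \<noteq> f \<and> e \<inter> f \<noteq> {} \<and>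
     int (card (nbhd H e \<inter> nbhd H f)) \<le> int n - 2"

end

theory Submission
  imports Defs
begin

lemma lin_eq:
  assumes "hypergraph V H" "linear_hg H" "g \<in> H" "g' \<in> H" "x \<noteq> y"
    "x \<in> g" "x \<in> g'" "y \<in> g" "y \<in> g'"
  shows "g = g'"
proof (rule ccontr)
  assume ne: "g \<noteq> g'"
  have fin: "finite (g \<inter> g')" using assms(1,3) unfolding hypergraph_def
    by (meson finite_Int finite_subset)
  have "{x,y} \<subseteq> g \<inter> g'" using assms by auto
  hence "card {x,y} \<le> card (g \<inter> g')" using fin card_mono by blast
  moreover have "card (g \<inter> g') \<le> 1" using assms(2,3,4) ne unfolding linear_hg_def by blast
  ultimately show False using assms(5) by simp
qed

lemma finH: "hypergraph V H \<Longrightarrow> finite H"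
  unfolding hypergraph_def by (meson Pow_iff finite_Pow_iff finite_subset subsetI)

lemma count_nb:
  assumes hg: "hypergraph V H" and lin: "linear_hg H" and e: "e \<in> H" and f: "f \<in> H"
    and ef: "e \<noteq> f" and we: "w \<in> e" and wf: "w \<in> f"
  shows "card (nbhd H e \<inter> nbhd H f) \<le> card {g\<in>H. w \<in> g \<and> g \<noteq> e \<and> g \<noteq> f}
            + (card e - 1) * (card f - 1)"
proof -
  define T where "T = {g\<in>H. w \<in> g \<and> g \<noteq> e \<and> g \<noteq> f}"
  define P where "P = {g\<in>H. w \<notin> g \<and> g \<inter> e \<noteq> {} \<and> g \<inter> f \<noteq> {}}"
  have fH: "finite H" using finH hg by blast
  have sub: "nbhd H e \<inter> nbhd H f \<subseteq> T \<union> P" unfolding nbhd_def T_def P_def by auto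
  have fT: "finite T" "finite P" using fH unfolding T_def P_def by auto
  have "card (nbhd H e \<inter> nbhd H f) \<le> card (T \<union> P)"
    using sub fT by (intro card_mono) auto
  hence c1: "card (nbhd H e \<inter> nbhd H f) \<le> card T + card P"
    using card_Un_le[of T P] by linarith
  define \<phi> where "\<phi> g = (SOME x. x \<in> g \<inter> e, SOME y. y \<in> g \<inter> f)" for g
  have fe: "finite e" "finite f" using hg e f unfolding hypergraph_def by (auto intro: finite_subset)
  have phi: "fst (\<phi> g) \<in> g \<inter> e \<and> snd (\<phi> g) \<in> g \<inter> f" if "g \<in> P" for g
  proof -
    have a: "\<exists>x. x \<in> g \<inter> e" "\<exists>y. y \<in> g \<inter> f" using that unfolding P_def by auto
    show ?thesis unfolding \<phi>_def using someI_ex[OF a(1)] someI_ex[OF a(2)] by simp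
  qed
  have inj: "inj_on \<phi> P"
  proof (rule inj_onI)
    fix g g' assume g: "g \<in> P" and g': "g' \<in> P" and eq: "\<phi> g = \<phi> g'"
    let ?x = "fst (\<phi> g)" and ?y = "snd (\<phi> g)"
    have xy: "?x \<in> g \<inter> e" "?y \<in> g \<inter> f" "?x \<in> g' \<inter> e" "?y \<in> g' \<inter> f"
      using phi[OF g] phi[OF g'] eq by auto
    have "?x \<noteq> ?y"
    proof
      assume h: "?x = ?y"
      have "?x = w"
      proof (rule ccontr)
        assume nw: "?x \<noteq> w"
        have "e = f" by (rule lin_eq[OF hg lin e f nw]) (use xy h we wf in auto)
        thus False using ef by simp
      qed
      thus False using xy g unfolding P_def by auto
    qed
    moreover have "g \<in> H" "g' \<in> H" using g g' unfolding P_def by auto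
    ultimately show "g = g'" using lin_eq[OF hg lin \<open>g \<in> H\<close> \<open>g' \<in> H\<close>, of ?x ?y] xy by blast
  qed
  have img: "\<phi> ` P \<subseteq> (e - {w}) \<times> (f - {w})"
  proof
    fix p assume "p \<in> \<phi> ` P"
    then obtain g where g: "g \<in> P" and p: "p = \<phi> g" by blast
    have "w \<notin> g" using g unfolding P_def by blast
    hence "fst p \<in> e - {w}" "snd p \<in> f - {w}" using phi[OF g] p by auto
    thus "p \<in> (e - {w}) \<times> (f - {w})" by (simp add: mem_Times_iff)
  qed
  have "card P \<le> card ((e - {w}) \<times> (f - {w}))"
    using card_inj_on_le[OF inj img] fe by auto
  also have "\<dots> = (card e - 1) * (card f - 1)"
    using we wf fe by (simp add: card_cartesian_product)
  finally show ?thesis using c1 unfolding T_def by simp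
qed

lemma disj_sum:
  assumes hg: "hypergraph V H" and lin: "linear_hg H" and e: "e \<in> H" and f: "f \<in> H"
    and ef: "e \<noteq> f" and we: "w \<in> e" and wf: "w \<in> f"
  shows "(\<Sum>g\<in>{g\<in>H. w \<in> g \<and> g \<noteq> e \<and> g \<noteq> f}. card g - 1) + (card e - 1) + (card f - 1)
          \<le> card V - 1"
proof -
  define T where "T = {g\<in>H. w \<in> g \<and> g \<noteq> e \<and> g \<noteq> f}"
  define S where "S = insert e (insert f T)"
  have fH: "finite H" using finH hg by blast
  have fT: "finite T" "finite S" using fH unfolding T_def S_def by auto
  have SH: "S \<subseteq> H" "\<forall>g\<in>S. w \<in> g" using e f we wf unfolding S_def T_def by auto
  have finE: "\<forall>g\<in>H. finite g" using hg unfolding hypergraph_def by (auto intro: finite_subset)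
  have fin: "\<forall>g\<in>S. finite (g - {w})" using SH(1) finE by blast
  have dis: "\<forall>i\<in>S. \<forall>j\<in>S. i \<noteq> j \<longrightarrow> (i - {w}) \<inter> (j - {w}) = {}"
  proof (intro ballI impI)
    fix i j assume i: "i \<in> S" and j: "j \<in> S" and ij: "i \<noteq> j"
    show "(i - {w}) \<inter> (j - {w}) = {}"
    proof (rule ccontr)
      assume "(i - {w}) \<inter> (j - {w}) \<noteq> {}"
      then obtain x where x: "x \<in> i" "x \<in> j" "x \<noteq> w" by auto
      have iH: "i \<in> H" "j \<in> H" using i j SH(1) by blast+
      have "i = j" by (rule lin_eq[OF hg lin iH x(3)]) (use x i j SH(2) in auto)
      thus False using ij by simp
    qed
  qed
  have "card (\<Union>g\<in>S. g - {w}) = (\<Sum>g\<in>S. card (g - {w}))"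
    using card_UN_disjoint[OF fT(2) fin dis] by simp
  moreover have "(\<Union>g\<in>S. g - {w}) \<subseteq> V - {w}" using SH hg unfolding hypergraph_def by auto
  moreover have "finite V" using hg unfolding hypergraph_def by auto
  moreover have "w \<in> V" using e we hg unfolding hypergraph_def by blast
  ultimately have le: "(\<Sum>g\<in>S. card (g - {w})) \<le> card V - 1"
    using card_mono[of "V - {w}" "\<Union>g\<in>S. g - {w}"] by (simp add: card_Diff_singleton)
  have "(\<Sum>g\<in>S. card (g - {w})) = (\<Sum>g\<in>S. card g - 1)"
    using SH(2) fin by (intro sum.cong) (simp_all add: card_Diff_singleton)
  also have "\<dots> = (card e - 1) + ((card f - 1) + (\<Sum>g\<in>T. card g - 1))"
  proof -
    have n1: "e \<notin> insert f T" "f \<notin> T" using ef unfolding T_def by auto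
    have "(\<Sum>g\<in>S. card g - 1) = (card e - 1) + (\<Sum>g\<in>insert f T. card g - 1)"
      unfolding S_def by (subst sum.insert) (use fT(1) n1 in auto)
    also have "(\<Sum>g\<in>insert f T. card g - 1) = (card f - 1) + (\<Sum>g\<in>T. card g - 1)"
      by (subst sum.insert) (use fT(1) n1 in auto)
    finally show ?thesis .
  qed
  finally show ?thesis using le unfolding T_def by simp
qed


lemma P1: assumes "(x::real) \<ge> 6" shows "(2*x-1)*((9/10)*x - 29/20) > x^2 + x + 1"
proof -
  have "x * ((4/5) * x - 24/5) \<ge> 0" using assms by (intro mult_nonneg_nonneg) auto
  thus ?thesis by (simp add: power2_eq_square field_simps)
qed

lemma main_bound:
  fixes \<delta> :: real and n k a b t m :: nat and tk :: real
  assumes d: "0 < \<delta>" "\<delta> \<le> 1/10" and kK: "real k \<ge> 1/\<delta>" "k \<ge> 6"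
    and nk: "k^2 + k + 1 \<ge> n" "n \<ge> (k-1)^2 + k + 1"
    and hg: "hypergraph V H" "card V = n" "linear_hg H"
    and sz: "\<forall>g\<in>H. real (card g) \<ge> (1 - \<delta>) * sqrt (real n)"
    and e: "e \<in> H" and f: "f \<in> H" and ef: "e \<noteq> f" and ce: "card e \<le> k" and cf: "card f \<le> k"
    and w: "w \<in> e \<inter> f"
    and alt: "card e \<le> k - 1 \<or> card f \<le> k - 1 \<or>
        real (card {g\<in>H. card g \<le> k - 1 \<and> w \<in> g}) \<le> 1 / (3 * \<delta>)"
  shows "useful_pair n H e f"
proof -
  define T where "T = {g\<in>H. w \<in> g \<and> g \<noteq> e \<and> g \<noteq> f}"
  have we: "w \<in> e" and wf: "w \<in> f" using w by auto
  have fH: "finite H" using finH hg(1) by blast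
  have fT: "finite T" using fH unfolding T_def by auto
  have C: "card (nbhd H e \<inter> nbhd H f) \<le> card T + (card e - 1) * (card f - 1)"
    using count_nb[OF hg(1) hg(3) e f ef we wf] unfolding T_def .
  have D: "(\<Sum>g\<in>T. card g - 1) + (card e - 1) + (card f - 1) \<le> n - 1"
    using disj_sum[OF hg(1) hg(3) e f ef we wf] hg(2) unfolding T_def by simp
  have finE: "\<forall>g\<in>H. finite g" using hg(1) unfolding hypergraph_def by (auto intro: finite_subset)
  have e1: "card e \<ge> 1" "card f \<ge> 1" using finE e f we wf by (auto simp: Suc_le_eq card_gt_0_iff)
  have TH: "\<forall>g\<in>T. card g \<ge> 1" using finE unfolding T_def by (auto simp: Suc_le_eq card_gt_0_iff)
  have DR: "(\<Sum>g\<in>T. real (card g) - 1) + (real (card e) - 1) + (real (card f) - 1) \<le> real n - 1"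
  proof -
    have "real ((\<Sum>g\<in>T. card g - 1) + (card e - 1) + (card f - 1)) \<le> real (n - 1)"
      using D by linarith
    moreover have "real ((\<Sum>g\<in>T. card g - 1) + (card e - 1) + (card f - 1))
        = (\<Sum>g\<in>T. real (card g) - 1) + (real (card e) - 1) + (real (card f) - 1)"
      using TH e1 by (simp add: of_nat_diff)
    moreover have "n \<ge> 1" using nk(2) by simp
    ultimately show ?thesis by (simp add: of_nat_diff)
  qed
  have kn: "(real k - 1/2)^2 \<le> real n"
  proof -
    have "real ((k-1)^2 + k + 1) \<le> real n" using nk(2) by linarith
    moreover have "real ((k-1)^2 + k + 1) = (real k - 1)^2 + real k + 1" using kK(2) by (simp add: of_nat_diff)
    moreover have "(real k - 1)^2 = real k * real k - 2 * real k + 1" "(real k - 1/2)^2 = real k * real k - real k + 1/4"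
      by (simp_all add: power2_eq_square field_simps)
    ultimately show ?thesis by linarith
  qed
  have sq: "real k - 1/2 \<le> sqrt (real n)" using kn kK(2) real_le_rsqrt by simp
  have nk1: "real n \<le> (real k)^2 + real k + 1" using nk(1)
  proof -
    have "real n \<le> real (k^2 + k + 1)" using nk(1) by (simp only: of_nat_le_iff)
    thus ?thesis by simp
  qed
  have nk2: "real n \<ge> (real k)^2 - real k + 2"
  proof -
    have "real ((k-1)^2 + k + 1) \<le> real n" using nk(2) by linarith
    moreover have "real ((k-1)^2 + k + 1) = (real k - 1)^2 + real k + 1" using kK(2) by (simp add: of_nat_diff)
    moreover have "(real k - 1)^2 = real k * real k - 2 * real k + 1" "(real k)^2 = real k * real k"
      by (simp_all add: power2_eq_square field_simps)
    ultimately show ?thesis by linarith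
  qed
  have sqL: "(1 - \<delta>) * sqrt (real n) \<ge> (1 - \<delta>) * (real k - 1/2)"
    using sq d by (intro mult_left_mono) auto
  have "real (card (nbhd H e \<inter> nbhd H f)) \<le> real n - 2"
  proof (cases "card e \<le> k - 1 \<or> card f \<le> k - 1")
    case True
    define L where "L = (1 - \<delta>) * sqrt (real n) - 1"
    have L9: "L \<ge> (9/10) * real k - (29/20)"
    proof -
      have "(1 - \<delta>) * (real k - 1/2) \<ge> (9/10) * (real k - 1/2)"
        using d kK(2) by (intro mult_right_mono) auto
      moreover have "(9/10) * (real k - 1/2) = (9/10) * real k - (9/20)" by (simp add: field_simps)
      ultimately show ?thesis using sqL unfolding L_def by linarith
    qed
    have "\<forall>g\<in>T. L \<le> real (card g) - 1" using sz unfolding T_def L_def by auto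
    hence "real (card T) * L \<le> (\<Sum>g\<in>T. real (card g) - 1)"
      using sum_bounded_below[of T L "\<lambda>g. real (card g) - 1"] by auto
    also have "\<dots> \<le> real n" using DR e1 by linarith
    finally have tL: "real (card T) * L \<le> real n" .
    have tb: "card T \<le> 2*k - 2"
    proof (rule ccontr)
      assume "\<not> ?thesis"
      hence "real (card T) \<ge> 2 * real k - 1" using kK(2) by linarith
      moreover have L0: "L \<ge> 0" using L9 kK(2) by linarith
      ultimately have "real (card T) * L \<ge> (2 * real k - 1) * L" by (intro mult_right_mono) auto
      moreover have "(2 * real k - 1) * L \<ge> (2 * real k - 1) * ((9/10) * real k - (29/20))"
        using L9 kK(2) by (intro mult_left_mono) auto
      moreover have "(2 * real k - 1) * ((9/10) * real k - (29/20)) > (real k)^2 + real k + 1"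
        using P1[of "real k"] kK(2) by simp
      ultimately show False using tL nk1 by linarith
    qed
    have ab: "(real (card e) - 1) * (real (card f) - 1) \<le> (real k - 2) * (real k - 1)"
    proof (cases "card e \<le> k - 1")
      case True
      have "real (card e) - 1 \<le> real k - 2" using True kK(2) by linarith
      moreover have "real (card f) - 1 \<le> real k - 1" using cf by linarith
      ultimately show ?thesis using e1 by (intro mult_mono) auto
    next
      case False
      hence F: "card f \<le> k - 1" using \<open>card e \<le> k - 1 \<or> card f \<le> k - 1\<close> by simp
      have "real (card f) - 1 \<le> real k - 2" using F kK(2) by linarith
      moreover have "real (card e) - 1 \<le> real k - 1" using ce by linarith
      ultimately have "(real (card e) - 1) * (real (card f) - 1) \<le> (real k - 1) * (real k - 2)"
        using e1 by (intro mult_mono) auto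
      thus ?thesis by (simp add: mult.commute)
    qed
    have "real (card (nbhd H e \<inter> nbhd H f)) \<le> real (card T) + (real (card e) - 1) * (real (card f) - 1)"
    proof -
      have "real (card (nbhd H e \<inter> nbhd H f)) \<le> real (card T + (card e - 1) * (card f - 1))"
        using C by linarith
      thus ?thesis using e1 by (simp add: of_nat_diff)
    qed
    moreover have "real (card T) \<le> 2 * real k - 2" using tb kK(2) by linarith
    moreover have "(real k - 2) * (real k - 1) = real k * real k - 3 * real k + 2" "(real k)^2 = real k * real k"
      by (simp_all add: power2_eq_square field_simps)
    ultimately show ?thesis using ab nk2 by linarith
  next
    case False
    hence ak: "card e = k" "card f = k" "real (card {g\<in>H. card g \<le> k - 1 \<and> w \<in> g}) \<le> 1 / (3 * \<delta>)"
      using alt ce cf by auto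
    define cp where "cp = max 0 (real k - (1 - \<delta>) * sqrt (real n))"
    define Q where "Q = {g\<in>T. card g \<le> k - 1}"
    have cpb: "cp \<le> 1/2 + \<delta> * real k"
    proof -
      have "(1 - \<delta>) * (real k - 1/2) = real k - 1/2 - \<delta> * real k + \<delta>/2" by (simp add: field_simps)
      hence "real k - (1 - \<delta>) * sqrt (real n) \<le> 1/2 + \<delta> * real k"
        using sqL d by linarith
      thus ?thesis unfolding cp_def using d kK(2) by simp
    qed
    have QM: "card Q \<le> card {g\<in>H. card g \<le> k - 1 \<and> w \<in> g}"
      using fH unfolding Q_def T_def by (intro card_mono) auto
    have cpm: "cp * real (card Q) \<le> real k / 2"
    proof -
      have "cp * real (card Q) \<le> (1/2 + \<delta> * real k) * (1 / (3 * \<delta>))"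
        using cpb ak(3) QM cp_def by (intro mult_mono) auto
      also have "\<dots> = 1 / (6 * \<delta>) + real k / 3" using d by (simp add: field_simps)
      also have "1 / (6 * \<delta>) \<le> real k / 6" using kK(1) d by (simp add: field_simps)
      finally show ?thesis by simp
    qed
    have pg: "real k - 1 \<le> (real (card g) - 1) + (if card g \<le> k - 1 then cp else 0)" if "g \<in> T" for g
    proof (cases "card g \<le> k - 1")
      case True
      have "real (card g) \<ge> (1 - \<delta>) * sqrt (real n)" using sz that unfolding T_def by auto
      thus ?thesis using True unfolding cp_def by auto
    next
      case False
      thus ?thesis unfolding cp_def by auto
    qed
    have "real (card T) * (real k - 1) \<le> (\<Sum>g\<in>T. (real (card g) - 1) + (if card g \<le> k - 1 then cp else 0))"
      using sum_bounded_below[of T "real k - 1"] pg by auto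
    also have "\<dots> = (\<Sum>g\<in>T. real (card g) - 1) + (\<Sum>g\<in>T. if card g \<le> k - 1 then cp else 0)"
      by (simp add: sum.distrib)
    also have "(\<Sum>g\<in>T. if card g \<le> k - 1 then cp else 0) = cp * real (card Q)"
      using sum.inter_filter[OF fT, of "\<lambda>_. cp" "\<lambda>g. card g \<le> k - 1"] unfolding Q_def by (simp add: mult.commute)
    finally have tk0: "real (card T) * (real k - 1) \<le> (\<Sum>g\<in>T. real (card g) - 1) + cp * real (card Q)" .
    have tk: "real (card T) * (real k - 1) \<le> real n + 1 - 2 * real k + real k / 2"
    proof -
      have "real (card e) = real k" "real (card f) = real k" using ak by simp_all
      thus ?thesis using DR cpm tk0 by linarith
    qed
    have tb: "card T + (k-1)^2 + 2 \<le> n"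
    proof (rule ccontr)
      assume "\<not> ?thesis"
      hence "card T + (k-1)^2 + 1 \<ge> n" by simp
      hence "real n \<le> real (card T + (k-1)^2 + 1)" by (simp only: of_nat_le_iff)
      moreover have "real (card T + (k-1)^2 + 1) = real (card T) + (real k - 1)^2 + 1"
        using kK(2) by (simp add: of_nat_diff)
      ultimately have "real (card T) + (real k - 1)^2 + 1 \<ge> real n" by simp
      define s where "s = real n - 1 - (real k - 1)^2"
      have sq1: "(real k - 1)^2 = real k * real k - 2 * real k + 1" "(real k)^2 = real k * real k" by (simp_all add: power2_eq_square field_simps)
      have s: "real (card T) \<ge> s" unfolding s_def using \<open>real (card T) + (real k - 1)^2 + 1 \<ge> real n\<close> by linarith
      have sk: "s \<ge> real k" using nk2 sq1 unfolding s_def power2_eq_square by linarith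
      have A: "real (card T) * (real k - 1) \<ge> s * (real k - 1)"
        using s kK(2) by (intro mult_right_mono) auto
      have B: "s * (real k - 2) \<ge> real k * (real k - 2)"
        using sk kK(2) by (intro mult_right_mono) auto
      have E1: "s * (real k - 1) = s * (real k - 2) + s" by (simp add: field_simps)
      have E2: "real k * (real k - 2) = real k * real k - 2 * real k" by (simp add: field_simps)
      show False using A B E1 E2 tk kK(2) sq1 unfolding s_def by linarith
    qed
    have "(card e - 1) * (card f - 1) = (k-1)^2" using ak by (simp add: power2_eq_square)
    hence "card (nbhd H e \<inter> nbhd H f) + 2 \<le> n" using C tb by linarith
    thus ?thesis by linarith
  qed
  hence "real (card (nbhd H e \<inter> nbhd H f) + 2) \<le> real n" by simp
  hence "card (nbhd H e \<inter> nbhd H f) + 2 \<le> n" by (simp only: of_nat_le_iff)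
  hence "int (card (nbhd H e \<inter> nbhd H f)) \<le> int n - 2" by simp
  moreover have "e \<inter> f \<noteq> {}" using w by blast
  ultimately show ?thesis unfolding useful_pair_def using ef by blast
qed

lemma k_large:
  fixes n k K :: nat
  assumes "n \<ge> (K+1)^2" "k^2 + k + 1 \<ge> n"
  shows "k \<ge> K"
proof (rule ccontr)
  assume "\<not> k \<ge> K"
  hence "k + 1 \<le> K" by simp
  hence "(k+1)^2 \<le> K^2" using power_mono[of "k+1" K 2] by blast
  moreover have "K^2 < (K+1)^2" by (simp add: power_strict_mono)
  moreover have "k^2 + k + 1 \<le> (k+1)^2" by (simp add: power2_eq_square)
  ultimately show False using assms by linarith
qed

theorem proposition5p5:
  shows "\<exists>\<delta>0>0. \<forall>\<delta>::real. 0 < \<delta> \<and> \<delta> \<le> \<delta>0 \<longrightarrow> (\<exists>n0::nat. \<forall>n k::nat.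
     \<forall>V H e f w.
       n \<ge> n0 \<and> k > 0 \<and> n > 0 \<and> k^2 + k + 1 \<ge> n \<and> n \<ge> (k-1)^2 + k + 1 \<and>
       hypergraph V H \<and> card V = n \<and> linear_hg H \<and>
       (\<forall>g\<in>H. real (card g) \<ge> (1 - \<delta>) * sqrt (real n)) \<and>
       e \<in> H \<and> f \<in> H \<and> e \<noteq> f \<and> e \<inter> f \<noteq> {} \<and> card e \<le> k \<and> card f \<le> k \<and>
       w \<in> e \<inter> f \<and>
       (card e \<le> k - 1 \<or> card f \<le> k - 1 \<or>
        real (card {g\<in>H. card g \<le> k - 1 \<and> w \<in> g}) \<le> 1 / (3 * \<delta>))
       \<longrightarrow> useful_pair n H e f)"
proof (intro exI[of _ "1/10::real"] conjI allI impI)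
  show "(0::real) < 1/10" by simp
  fix \<delta> :: real assume d: "0 < \<delta> \<and> \<delta> \<le> 1/10"
  define K where "K = nat \<lceil>1/\<delta>\<rceil> + 6"
  show "\<exists>n0::nat. \<forall>n k::nat.
     \<forall>V H e f w.
       n \<ge> n0 \<and> k > 0 \<and> n > 0 \<and> k^2 + k + 1 \<ge> n \<and> n \<ge> (k-1)^2 + k + 1 \<and>
       hypergraph V H \<and> card V = n \<and> linear_hg H \<and>
       (\<forall>g\<in>H. real (card g) \<ge> (1 - \<delta>) * sqrt (real n)) \<and>
       e \<in> H \<and> f \<in> H \<and> e \<noteq> f \<and> e \<inter> f \<noteq> {} \<and> card e \<le> k \<and> card f \<le> k \<and>
       w \<in> e \<inter> f \<and>
       (card e \<le> k - 1 \<or> card f \<le> k - 1 \<or>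
        real (card {g\<in>H. card g \<le> k - 1 \<and> w \<in> g}) \<le> 1 / (3 * \<delta>))
       \<longrightarrow> useful_pair n H e f"
  proof (intro exI[of _ "(K+1)^2"] allI impI)
    fix n k :: nat and V H e f w
    assume A: "(K+1)^2 \<le> n \<and> k > 0 \<and> n > 0 \<and> k^2 + k + 1 \<ge> n \<and> n \<ge> (k-1)^2 + k + 1 \<and>
       hypergraph V H \<and> card V = n \<and> linear_hg H \<and>
       (\<forall>g\<in>H. real (card g) \<ge> (1 - \<delta>) * sqrt (real n)) \<and>
       e \<in> H \<and> f \<in> H \<and> e \<noteq> f \<and> e \<inter> f \<noteq> {} \<and> card e \<le> k \<and> card f \<le> k \<and>
       w \<in> e \<inter> f \<and>
       (card e \<le> k - 1 \<or> card f \<le> k - 1 \<or>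
        real (card {g\<in>H. card g \<le> k - 1 \<and> w \<in> g}) \<le> 1 / (3 * \<delta>))"
    have kK: "k \<ge> K" using k_large[of K n k] A by blast
    have "real K \<ge> 1/\<delta>"
    proof -
      have "1/\<delta> \<le> of_int \<lceil>1/\<delta>\<rceil>" by (rule le_of_int_ceiling)
      also have "\<dots> = real (nat \<lceil>1/\<delta>\<rceil>)" using d by simp
      finally show ?thesis unfolding K_def by simp
    qed
    hence k1: "real k \<ge> 1/\<delta>" using kK by linarith
    have k6: "k \<ge> 6" using kK unfolding K_def by simp
    show "useful_pair n H e f"
      by (rule main_bound[of \<delta> k n V H e f w]) (use A d k1 k6 in auto)
  qed
qed

end
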